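(* Let $T$ be an interface element, labelled (interchanging the roles of $+$ and $-$, including $\beta^\pm$, if necessary) so that $|\overline{\mathcal I^-}|\le|\overline{\mathcal I^+}|$. Let $F\in l$ be arbitrary and put $\mathbf v(F)=\bar{\mathbf n}$. Define the vectors $$\boldsymbol\gamma=\big(\nabla\psi_{i,T}(F)\cdot\bar{\mathbf n}\big)_{i\in\overline{\mathcal I^-}},\qquad \boldsymbol\delta=\Big(\frac1{|b_i|}\int_{b_i\cap T^-}L(X)\,ds\Big)_{i\in\overline{\mathcal I^-}},\qquad L(X)=\bar{\mathbf n}\cdot(X-D).$$ Then, for every interface location, $\boldsymbol\gamma^T\boldsymbol\delta\in[0,1]$.
   Context: On a mesh element $T$ (a triangle or a rectangle) with edges $b_i$, $i\in\mathcal I=\{1,\dots,N\}$ ($N=3$ for triangles, $N=4$ for rectangles), $\Pi_T=\mathrm{span}\{1,x,y\}$ (Crouzeix–Raviart, triangles) or $\Pi_T=\mathrm{span}\{1,x,y,x^2-y^2\}$ (rotated-$Q_1$, rectangles), and $\psi_{i,T}\in\Pi_T$ are the shape functions with $\frac{1}{|b_j|}\int_{b_j}\psi_{i,T}\,ds=\delta_{ij}$. The mesh is a Cartesian triangular or rectangular mesh of mesh size $h$. $T$ is an interface element: a curve $\Gamma$ separating $\Omega^+$ from $\Omega^-$ crosses the interior of $T$ and meets $\partial T$ at exactly two points $D,E$ lying on different edges; $l$ is the segment $DE$, $\bar{\mathbf n}$ a unit normal to $l$ (either orientation; the quantity $\boldsymbol\gamma^T\boldsymbol\delta$ does not depend on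 it), and $T^\pm=T\cap\Omega^\pm$. Index sets: $\mathcal I^s=\{i: b_i\subseteq\overline{T^s}\}$, $\mathcal I^{int}=\{i: b_i\cap T^+\neq\emptyset\text{ and }b_i\cap T^-\neq\emptyset\}$, $\overline{\mathcal I^s}=\mathcal I^s\cup\mathcal I^{int}$, $s=\pm$. Note that $b_i\cap T^-$ coincides with the part of $b_i$ on the corresponding side of $l$, since $\Gamma$ and $l$ meet $\partial T$ at the same points. *)

theory Defs
  imports "HOL-Analysis.Analysis"
begin

definition grad :: "(real \<times> real \<Rightarrow> real) \<Rightarrow> real \<times> real \<Rightarrow> real \<times> real" where
  "grad f X = (deriv (\<lambda>t. f (t, snd X)) (fst X), deriv (\<lambda>t. f (fst X, t)) (snd X))"

definition CR_space :: "(real \<times> real \<Rightarrow> real) set" where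
  "CR_space = {f. \<exists>a b c. \<forall>X. f X = a + b * fst X + c * snd X}"

definition RQ1_space :: "(real \<times> real \<Rightarrow> real) set" where
  "RQ1_space = {f. \<exists>a b c d. \<forall>X.
      f X = a + b * fst X + c * snd X + d * ((fst X)\<^sup>2 - (snd X)\<^sup>2)}"

text \<open>Elements of a Cartesian triangular mesh of mesh size h (half squares, either
  diagonal) and of a Cartesian rectangular mesh of mesh size h, given by the list of
  their vertices in boundary order.\<close>
definition cart_triangles :: "real \<Rightarrow> (real \<times> real) list set" where
  "cart_triangles h = {[P, P + (s1 * h, 0), P + (0, s2 * h)] | P s1 s2.
      s1 \<in> {-1, 1} \<and> s2 \<in> {-1, 1}}"

definition cart_rectangles :: "real \<Rightarrow> (real \<times> real) list set" where
  "cart_rectangles h = {[(x0, y0), (x0 + h, y0), (x0 + h, y0 + h), (x0, y0 + h)] | x0 y0. True}"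

definition elem :: "(real \<times> real) list \<Rightarrow> (real \<times> real) set" where
  "elem V = convex hull (set V)"

definition edge_pt :: "(real \<times> real) list \<Rightarrow> nat \<Rightarrow> real \<Rightarrow> real \<times> real" where
  "edge_pt V i t = V ! i + t *\<^sub>R (V ! ((i + 1) mod length V) - V ! i)"

definition edge :: "(real \<times> real) list \<Rightarrow> nat \<Rightarrow> (real \<times> real) set" where
  "edge V i = closed_segment (V ! i) (V ! ((i + 1) mod length V))"

text \<open>(1/|b_i|) \<integral>_{b_i \<inter> S} g ds, written with the affine parametrisation of b_i
  (ds = |b_i| dt).\<close>
definition edge_avg_on :: "(real \<times> real) list \<Rightarrow> nat \<Rightarrow> (real \<times> real) set
    \<Rightarrow> (real \<times> real \<Rightarrow> real) \<Rightarrow> real" where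
  "edge_avg_on V i S g = integral {0..1} (\<lambda>t. indicator S (edge_pt V i t) * g (edge_pt V i t))"

definition edge_avg :: "(real \<times> real) list \<Rightarrow> nat \<Rightarrow> (real \<times> real \<Rightarrow> real) \<Rightarrow> real" where
  "edge_avg V i g = edge_avg_on V i UNIV g"

definition I_int :: "(real \<times> real) list \<Rightarrow> (real \<times> real) set \<Rightarrow> (real \<times> real) set \<Rightarrow> nat set" where
  "I_int V Tp Tm = {i. i < length V \<and> edge V i \<inter> Tp \<noteq> {} \<and> edge V i \<inter> Tm \<noteq> {}}"

definition I_side :: "(real \<times> real) list \<Rightarrow> (real \<times> real) set \<Rightarrow> nat set" where
  "I_side V S = {i. i < length V \<and> edge V i \<subseteq> closure S}"

definition I_bar :: "(real \<times> real) list \<Rightarrow> (real \<times> real) set \<Rightarrow> (real \<times> real) set \<Rightarrow> nat set" where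
  "I_bar V S Sother = I_side V S \<union> I_int V S Sother"

end

theory Submission
  imports Defs
begin

definition phi :: "real \<Rightarrow> real \<Rightarrow> real" where
  "phi u v = (if u = v then min u 0 else ((min v 0)^2 - (min u 0)^2) / (2*(v-u)))"

lemma phi_sym: "phi u v = phi v u"
  unfolding phi_def by (auto simp: field_simps)

lemma phi_nn: "0 \<le> u \<Longrightarrow> 0 \<le> v \<Longrightarrow> phi u v = 0"
  unfolding phi_def by auto

lemma phi_np: "u \<le> 0 \<Longrightarrow> v \<le> 0 \<Longrightarrow> phi u v = (u+v)/2"
  unfolding phi_def by (auto simp: field_simps power2_eq_square min_def)

lemma phi_mix: "u < 0 \<Longrightarrow> 0 \<le> v \<Longrightarrow> phi u v = -(u^2)/(2*(v-u))"
  unfolding phi_def by (auto simp: min_def)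

lemma phi_mix': "v < 0 \<Longrightarrow> 0 \<le> u \<Longrightarrow> phi u v = -(v^2)/(2*(u-v))"
  using phi_mix[of v u] phi_sym by simp

lemma phi_hom: "0 < h \<Longrightarrow> phi (h*u) (h * v) = h * phi u v"
proof -
  assume h: "0 < h"
  have m: "min (h*x) 0 = h * min x 0" for x using h by (auto simp: min_def mult_le_0_iff)
  show ?thesis unfolding phi_def m using h
    by (auto simp: field_simps power2_eq_square)
qed



lemma tri_one:
  fixes x y z :: real
  assumes x: "x \<le> 0" and y: "0 \<le> y" and z: "0 \<le> z"
  shows "0 \<le> x^2 / ((y-x)*(z-x)) \<and> x^2 / ((y-x)*(z-x)) \<le> 1"
proof -
  have "(-x)*(-x) \<le> (y-x)*(z-x)" using x y z
    by (intro mult_mono) auto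
  hence "x^2 \<le> (y-x)*(z-x)" by (simp add: power2_eq_square)
  moreover have "0 \<le> (y-x)*(z-x)" using x y z by simp
  ultimately show ?thesis
  proof (cases "(y-x)*(z-x) = 0")
    case False
    with \<open>0 \<le> (y-x)*(z-x)\<close> have "0 < (y-x)*(z-x)" by linarith
    with \<open>x^2 \<le> (y-x)*(z-x)\<close> show ?thesis by (simp add: divide_le_eq_1)
  qed simp
qed

lemma fin1: "0 \<le> (f::real) \<Longrightarrow> f \<le> 1 \<Longrightarrow> 0 < N \<Longrightarrow> 0 \<le> N*f \<and> N*f \<le> N"
  by (simp add: mult_le_cancel_left1)

lemma fin2: "0 \<le> (f::real) \<Longrightarrow> f \<le> 1 \<Longrightarrow> 0 < N \<Longrightarrow> 0 \<le> N*(1-f) \<and> N*(1-f) \<le> N"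
  by (simp add: mult_le_cancel_left1)

lemma tri_main:
  fixes a b c :: real
  assumes nz: "(b-a)^2 + (c-a)^2 > 0"
  defines "T \<equiv> 2*((phi b c - phi c a)*(b-a) + (phi b c - phi a b)*(c-a))"
  shows "0 \<le> T \<and> T \<le> (b-a)^2 + (c-a)^2"
proof -
  let ?N = "(b-a)^2 + (c-a)^2"
  consider "a < 0" "b < 0" "c < 0" | "a < 0" "b < 0" "0 \<le> c" | "a < 0" "0 \<le> b" "c < 0"
    | "a < 0" "0 \<le> b" "0 \<le> c" | "0 \<le> a" "b < 0" "c < 0" | "0 \<le> a" "b < 0" "0 \<le> c"
    | "0 \<le> a" "0 \<le> b" "c < 0" | "0 \<le> a" "0 \<le> b" "0 \<le> c" by linarith
  then show ?thesis
  proof cases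
    case 1
    then have "T = ?N" unfolding T_def by (simp add: phi_np power2_eq_square field_simps)
    then show ?thesis using nz by simp
  next
    case 2
    have nz1: "c-a \<noteq> 0" "c-b \<noteq> 0" using 2 by auto
    have e: "T = ?N * (1 - c^2/((c-a)*(c-b)))" unfolding T_def
      using 2 nz1
      apply (simp add: phi_np phi_nn phi_mix phi_mix')
      apply (simp add: divide_simps)
      apply (simp add: algebra_simps power2_eq_square)
      done
    show ?thesis using tri_one[of "-c" "-a" "-b"] 2 nz unfolding e
      by (intro fin1 fin2) (auto simp: algebra_simps)
  next
    case 3
    have nz1: "b-a \<noteq> 0" "b-c \<noteq> 0" using 3 by auto
    have e: "T = ?N * (1 - b^2/((b-a)*(b-c)))" unfolding T_def
      using 3 nz1
      apply (simp add: phi_np phi_nn phi_mix phi_mix')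
      apply (simp add: divide_simps)
      apply (simp add: algebra_simps power2_eq_square)
      done
    show ?thesis using tri_one[of "-b" "-a" "-c"] 3 nz unfolding e
      by (intro fin1 fin2) (auto simp: algebra_simps)
  next
    case 4
    have nz1: "b-a \<noteq> 0" "c-a \<noteq> 0" using 4 by auto
    have e: "T = ?N * (a^2/((b-a)*(c-a)))" unfolding T_def
      using 4 nz1
      apply (simp add: phi_np phi_nn phi_mix phi_mix')
      apply (simp add: divide_simps)
      apply (simp add: algebra_simps power2_eq_square)
      done
    show ?thesis using tri_one[of "a" "b" "c"] 4 nz unfolding e
      by (intro fin1 fin2) (auto simp: algebra_simps)
  next
    case 5
    have nz1: "a-b \<noteq> 0" "a-c \<noteq> 0" using 5 by auto
    have e: "T = ?N * (1 - a^2/((a-b)*(a-c)))" unfolding T_def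
      using 5 nz1
      apply (simp add: phi_np phi_nn phi_mix phi_mix')
      apply (simp add: divide_simps)
      apply (simp add: algebra_simps power2_eq_square)
      done
    show ?thesis using tri_one[of "-a" "-b" "-c"] 5 nz unfolding e
      by (intro fin1 fin2) (auto simp: algebra_simps)
  next
    case 6
    have nz1: "a-b \<noteq> 0" "c-b \<noteq> 0" using 6 by auto
    have e: "T = ?N * (b^2/((a-b)*(c-b)))" unfolding T_def
      using 6 nz1
      apply (simp add: phi_np phi_nn phi_mix phi_mix')
      apply (simp add: divide_simps)
      apply (simp add: algebra_simps power2_eq_square)
      done
    show ?thesis using tri_one[of "b" "a" "c"] 6 nz unfolding e
      by (intro fin1 fin2) (auto simp: algebra_simps)
  next
    case 7
    have nz1: "a-c \<noteq> 0" "b-c \<noteq> 0" using 7 by auto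
    have e: "T = ?N * (c^2/((a-c)*(b-c)))" unfolding T_def
      using 7 nz1
      apply (simp add: phi_np phi_nn phi_mix phi_mix')
      apply (simp add: divide_simps)
      apply (simp add: algebra_simps power2_eq_square)
      done
    show ?thesis using tri_one[of "c" "a" "b"] 7 nz unfolding e
      by (intro fin1 fin2) (auto simp: algebra_simps)
  next
    case 8
    then have "T = 0" unfolding T_def by (simp add: phi_nn)
    then show ?thesis using nz by simp
  qed
qed



definition rectD :: "real \<Rightarrow> real \<Rightarrow> real \<Rightarrow> real \<Rightarrow> real" where
  "rectD h a p q = -3*(phi a (a+p*h) + phi (a+p*h+q*h) (a+q*h) - phi (a+p*h) (a+p*h+q*h) - phi (a+q*h) a)/(2*h^2)"

definition rectS :: "real \<Rightarrow> real \<Rightarrow> real \<Rightarrow> real \<Rightarrow> real \<Rightarrow> real \<Rightarrow> real" where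
  "rectS h a p q u w = p*((phi (a+p*h) (a+p*h+q*h) - phi (a+q*h) a)/h + rectD h a p q*(2*u-h))
     + q*((phi (a+p*h+q*h) (a+q*h) - phi a (a+p*h))/h + rectD h a p q*(h-2*w))"

lemma core_ineq:
  fixes p q s X Y K :: real
  assumes p: "0 < p" and pq: "p \<le> q" and s0: "0 \<le> s" and sp: "s \<le> p"
    and X: "0 \<le> X" and Y: "0 \<le> Y" and XY: "X + Y = s" and n: "p^2 + q^2 = 1"
    and K: "K = q - p + 2*X - 2*Y"
  shows "0 \<le> s^2*(2*(p^2+q^2) + 3*(q-p)*K)/(4*p*q) \<and> s^2*(2*(p^2+q^2) + 3*(q-p)*K)/(4*p*q) \<le> 1"
proof -
  have q: "0 < q" using p pq by linarith
  have qp: "0 \<le> q - p" using pq by simp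
  have Klo: "q - 3*p \<le> K" unfolding K using X Y XY sp by linarith
  have Khi: "K \<le> q - p + 2 * s" unfolding K using X Y XY by linarith
  have "(q-p)*(q-3*p) \<le> (q-p)*K" using Klo qp by (rule mult_left_mono)
  moreover have "0 \<le> 2*(p^2+q^2) + 3*((q-p)*(q-3*p))"
  proof -
    have "2*(p^2+q^2) + 3*((q-p)*(q-3*p)) = 5*(q - 6/5*p)^2 + (19/5)*p^2"
      by (simp add: power2_eq_square algebra_simps)
    also have "\<dots> \<ge> 0" by simp
    finally show ?thesis .
  qed
  ultimately have lo: "0 \<le> 2*(p^2+q^2) + 3*(q-p)*K" by linarith
  have "(q-p)*K \<le> (q-p)*(q-p+2 * s)" using Khi qp by (rule mult_left_mono)
  hence "2*(p^2+q^2) + 3*(q-p)*K \<le> 2*(p^2+q^2) + 3*(q-p)*(q-p+2 * s)" by linarith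
  also have "\<dots> \<le> 2*(p^2+q^2) + 3*(q-p)*(q-p+2*p)"
    using qp sp by (simp add: mult_left_mono)
  also have "\<dots> = 5*q^2 - p^2" using n by (simp add: power2_eq_square algebra_simps)
  finally have hi1: "2*(p^2+q^2) + 3*(q-p)*K \<le> 5*q^2 - p^2" .
  have s2: "s^2 \<le> p^2" using s0 sp by (simp add: power_mono)
  have "s^2*(2*(p^2+q^2) + 3*(q-p)*K) \<le> s^2*(5*q^2 - p^2)"
    using hi1 by (simp add: mult_left_mono)
  also have "\<dots> \<le> p^2*(5*q^2 - p^2)"
  proof (rule mult_right_mono[OF s2])
    have "p^2 \<le> q^2" using p pq by (simp add: power_mono)
    moreover have "0 \<le> q^2" by simp
    ultimately show "0 \<le> 5*q^2 - p^2" by linarith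
  qed
  also have "\<dots> \<le> 4*p*q"
  proof -
    define t where "t = q - p"
    have t0: "0 \<le> t" using qp t_def by simp
    have "4*p*q - p^2*(5*q^2 - p^2) = p*(4*q*(p^2+q^2) - p*(5*q^2 - p^2))" using n
      by (simp add: power2_eq_square algebra_simps)
    also have "4*q*(p^2+q^2) - p*(5*q^2 - p^2) = 4*p^3+6*p^2*t+7*p*t^2+4*t^3"
      unfolding t_def by (simp add: power2_eq_square power3_eq_cube algebra_simps)
    finally have "4*p*q - p^2*(5*q^2 - p^2) = p*(4*p^3+6*p^2*t+7*p*t^2+4*t^3)" .
    moreover have "0 \<le> p*(4*p^3+6*p^2*t+7*p*t^2+4*t^3)" using p t0 by simp
    ultimately show ?thesis by linarith
  qed
  finally have hi: "s^2*(2*(p^2+q^2) + 3*(q-p)*K) \<le> 4*p*q" .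
  have d: "0 < 4*p*q" using p q by simp
  show ?thesis using lo hi d by (simp add: divide_le_eq_1)
qed

lemma case2:
  fixes a p q u w :: real
  assumes pq: "p \<le> q" and n: "p^2 + q^2 = 1" and u: "0 \<le> u" "u \<le> 1" and w: "0 \<le> w" "w \<le> 1"
    and l: "a + p*u + q*w = 0" and c: "a < 0" "0 \<le> a + p"
  shows "0 \<le> rectS 1 a p q u w \<and> rectS 1 a p q u w \<le> 1"
proof -
  have p: "0 < p" using c by linarith
  have q: "0 < q" using p pq by linarith
  have h0: "phi a (a+p) = -(a^2)/(2*p)" using phi_mix[of a "a+p"] c by simp
  have h1: "phi (a+p) (a+p+q) = 0" using c q by (intro phi_nn) auto
  have h2: "phi (a+p+q) (a+q) = 0" using c q pq by (intro phi_nn) auto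
  have h3: "phi (a+q) a = -(a^2)/(2*q)" using phi_mix'[of a "a+q"] c pq by simp
  have e: "rectS 1 a p q u w = (-a)^2*(2*(p^2+q^2) + 3*(q-p)*(q - p + 2*(p*u) - 2*(q*w)))/(4*p*q)"
    unfolding rectS_def rectD_def using p q
    apply (simp add: h0 h1 h2 h3)
    apply (simp add: divide_simps)
    apply (simp add: algebra_simps power2_eq_square)
    done
  show ?thesis unfolding e
    by (rule core_ineq[OF p pq _ _ _ _ _ n]) (use c u w l p q in \<open>auto intro: mult_nonneg_nonneg\<close>)
qed

lemma case4:
  fixes a p q u w :: real
  assumes pq: "p \<le> q" and n: "p^2 + q^2 = 1" and u: "0 \<le> u" "u \<le> 1" and w: "0 \<le> w" "w \<le> 1"
    and l: "a + p*u + q*w = 0" and c: "a + q < 0" "0 \<le> a + p + q"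
  shows "0 \<le> rectS 1 a p q u w \<and> rectS 1 a p q u w \<le> 1"
proof -
  have p: "0 < p" using c by linarith
  have q: "0 < q" using p pq by linarith
  have h0: "phi a (a+p) = (a + (a+p))/2" using c pq by (intro phi_np) auto
  have h1: "phi (a+p) (a+p+q) = -((a+p)^2)/(2*q)" using phi_mix[of "a+p" "a+p+q"] c pq by simp
  have h2: "phi (a+p+q) (a+q) = -((a+q)^2)/(2*p)" using phi_mix'[of "a+q" "a+p+q"] c by simp
  have h3: "phi (a+q) a = ((a+q) + a)/2" using c q by (intro phi_np) auto
  have e: "rectS 1 a p q u w = (p^2+q^2) - (a+p+q)^2*(2*(p^2+q^2) + 3*(q-p)*(q - p + 2*(p*(1-u)) - 2*(q*(1-w))))/(4*p*q)"
    unfolding rectS_def rectD_def using p q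
    apply (simp add: h0 h1 h2 h3)
    apply (simp add: divide_simps)
    apply (simp add: algebra_simps power2_eq_square)
    done
  have "0 \<le> (a+p+q)^2*(2*(p^2+q^2) + 3*(q-p)*(q - p + 2*(p*(1-u)) - 2*(q*(1-w))))/(4*p*q) \<and> (a+p+q)^2*(2*(p^2+q^2) + 3*(q-p)*(q - p + 2*(p*(1-u)) - 2*(q*(1-w))))/(4*p*q) \<le> 1"
  proof (rule core_ineq[OF p pq _ _ _ _ _ n])
    show "0 \<le> a+p+q" using c by simp
    show "a+p+q \<le> p" using c by simp
    show "0 \<le> p*(1-u)" using p u by simp
    show "0 \<le> q*(1-w)" using q w by simp
    show "p*(1-u) + q*(1-w) = a+p+q" using l by (simp add: algebra_simps)
  qed simp
  then show ?thesis unfolding e n by linarith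
qed

lemma case3:
  fixes a p q u w :: real
  assumes p: "0 \<le> p" and n: "p^2 + q^2 = 1" and u: "0 \<le> u" "u \<le> 1"
    and l: "a + p*u + q*w = 0" and c: "a + p < 0" "0 \<le> a + q"
  shows "0 \<le> rectS 1 a p q u w \<and> rectS 1 a p q u w \<le> 1"
proof -
  define x where "x = -(a+p)"
  define y where "y = a+q"
  have x: "0 < x" and y: "0 \<le> y" using c by (auto simp: x_def y_def)
  have qxy: "q = p + x + y" by (simp add: x_def y_def)
  have q: "0 < q" using qxy p x y by linarith
  have h0: "phi a (a+p) = (a + (a+p))/2" using c p by (intro phi_np) auto
  have h1: "phi (a+p) (a+p+q) = -((a+p)^2)/(2*q)" using phi_mix[of "a+p" "a+p+q"] c p by simp
  have h2: "phi (a+p+q) (a+q) = 0" using c p by (intro phi_nn) auto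
  have h3: "phi (a+q) a = -(a^2)/(2*q)" using phi_mix'[of a "a+q"] c p by simp
  define E where "E = p*(x+y) + 2*x*y"
  have wq: "w = -(a+p*u)/q" using l q by (simp add: field_simps)
  have e: "4*q*rectS 1 a p q u w = 4*(p/2+x)*(p^2+q^2) + 3*E*((p/2+y)-(p/2+x)+2*p*(2*u-1))"
    unfolding rectS_def rectD_def E_def x_def y_def wq using q
    apply (simp add: h0 h1 h2 h3)
    apply (simp add: divide_simps)
    apply (simp add: algebra_simps power2_eq_square)
    done
  have E0: "0 \<le> E" unfolding E_def using p x y by simp
  have f1: "4*(p/2+x)*(p^2+q^2) + 3*E*((p/2+y)-(p/2+x)+2*p*(2*u-1))
     = 7*p*x^2 + p*(5*(y-p/5)^2 + (19/5)*p^2) + 6*p^2*x + 10*x*y^2 + 2*x^2*y + 4*x^3 + 12*p*E*u"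
    unfolding qxy E_def by (simp add: algebra_simps power2_eq_square power3_eq_cube)
  have f2: "4*q*(p^2+q^2) - (4*(p/2+x)*(p^2+q^2) + 3*E*((p/2+y)-(p/2+x)+2*p*(2*u-1)))
     = 7*p*y^2 + p*(5*(x-p/5)^2 + (19/5)*p^2) + 6*p^2*y + 10*x^2*y + 2*x*y^2 + 4*y^3 + 12*p*E*(1-u)"
    unfolding qxy E_def by (simp add: algebra_simps power2_eq_square power3_eq_cube)
  have "0 \<le> 7*p*x^2 + p*(5*(y-p/5)^2 + (19/5)*p^2) + 6*p^2*x + 10*x*y^2 + 2*x^2*y + 4*x^3 + 12*p*E*u"
    using p x y E0 u by simp
  hence lo: "0 \<le> 4*q*rectS 1 a p q u w" using e f1 by simp
  have "0 \<le> 7*p*y^2 + p*(5*(x-p/5)^2 + (19/5)*p^2) + 6*p^2*y + 10*x^2*y + 2*x*y^2 + 4*y^3 + 12*p*E*(1-u)"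
    using p x y E0 u by simp
  hence hi: "4*q*rectS 1 a p q u w \<le> 4*q" using e f2 n by simp
  show ?thesis using lo hi q
    by (simp add: zero_le_mult_iff mult_le_cancel_left1 mult.assoc)
qed

lemma case1:
  fixes a p q u w :: real
  assumes "0 \<le> p" "0 \<le> q" "0 \<le> a"
  shows "rectS 1 a p q u w = 0"
  unfolding rectS_def rectD_def using assms by (simp add: phi_nn)

lemma case5:
  fixes a p q u w :: real
  assumes "0 \<le> p" "0 \<le> q" "a + p + q < 0" and n: "p^2 + q^2 = 1"
  shows "rectS 1 a p q u w = 1"
proof -
  have "rectS 1 a p q u w = p^2 + q^2"
    unfolding rectS_def rectD_def using assms by (simp add: phi_np power2_eq_square field_simps)
  thus ?thesis using n by simp
qed

lemma rect_norm:
  fixes a p q u w :: real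
  assumes p: "0 \<le> p" and pq: "p \<le> q" and n: "p^2 + q^2 = 1" and u: "0 \<le> u" "u \<le> 1" and w: "0 \<le> w" "w \<le> 1"
    and l: "a + p*u + q*w = 0"
  shows "0 \<le> rectS 1 a p q u w \<and> rectS 1 a p q u w \<le> 1"
proof -
  consider "0 \<le> a" | "a < 0" "0 \<le> a + p" | "a + p < 0" "0 \<le> a + q" | "a + q < 0" "0 \<le> a + p + q"
    | "a + p + q < 0" by linarith
  then show ?thesis
  proof cases
    case 1 then show ?thesis using case1[of p q a u w] p pq by simp
  next
    case 2 then show ?thesis using case2[OF pq n u w l] by simp
  next
    case 3 then show ?thesis using case3[OF p n u l] by simp
  next
    case 4 then show ?thesis using case4[OF pq n u w l] by simp
  next
    case 5 then show ?thesis using case5[of p q a u w] p pq n by simp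
  qed
qed

lemma symR1: "rectS 1 (a+p) (-p) q (1-u) w = rectS 1 a p q u w"
proof -
  have "phi (a+p) a = phi a (a+p)" "phi a (a+q) = phi (a+q) a"
    "phi (a+q) (a+p+q) = phi (a+p+q) (a+q)" "phi (a+p+q) (a+p) = phi (a+p) (a+p+q)"
    by (simp_all add: phi_sym)
  then show ?thesis unfolding rectS_def rectD_def
    by (simp add: algebra_simps)
qed

lemma symR2: "rectS 1 (a+q) p (-q) u (1-w) = rectS 1 a p q u w"
proof -
  have "phi (a+q) (a+p+q) = phi (a+p+q) (a+q)" "phi (a+p+q) (a+p) = phi (a+p) (a+p+q)"
    "phi a (a+p) = phi (a+p) a" "phi (a+q) a = phi a (a+q)"
    by (simp_all add: phi_sym)
  then show ?thesis unfolding rectS_def rectD_def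
    by (simp add: algebra_simps)
qed

lemma symR3: "rectS 1 a q p w u = rectS 1 a p q u w"
proof -
  have "phi a (a+q) = phi (a+q) a" "phi (a+q) (a+p+q) = phi (a+p+q) (a+q)"
    "phi (a+p+q) (a+p) = phi (a+p) (a+p+q)" "phi (a+p) a = phi a (a+p)"
    by (simp_all add: phi_sym)
  then show ?thesis unfolding rectS_def rectD_def
    by (simp add: algebra_simps)
qed

lemma rect_pq:
  fixes a p q u w :: real
  assumes p: "0 \<le> p" and q: "0 \<le> q" and n: "p^2 + q^2 = 1" and u: "0 \<le> u" "u \<le> 1" and w: "0 \<le> w" "w \<le> 1"
    and l: "a + p*u + q*w = 0"
  shows "0 \<le> rectS 1 a p q u w \<and> rectS 1 a p q u w \<le> 1"
proof (cases "p \<le> q")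
  case True then show ?thesis using rect_norm[OF p True n u w l] by simp
next
  case False
  have "0 \<le> rectS 1 a q p w u \<and> rectS 1 a q p w u \<le> 1"
    using False n l by (intro rect_norm[OF q _ _ w u]) (auto simp: algebra_simps)
  then show ?thesis by (simp add: symR3)
qed

lemma rect_q:
  fixes a p q u w :: real
  assumes q: "0 \<le> q" and n: "p^2 + q^2 = 1" and u: "0 \<le> u" "u \<le> 1" and w: "0 \<le> w" "w \<le> 1"
    and l: "a + p*u + q*w = 0"
  shows "0 \<le> rectS 1 a p q u w \<and> rectS 1 a p q u w \<le> 1"
proof (cases "0 \<le> p")
  case True then show ?thesis using rect_pq[OF True q n u w l] by simp
next
  case False
  have "0 \<le> rectS 1 (a+p) (-p) q (1-u) w \<and> rectS 1 (a+p) (-p) q (1-u) w \<le> 1"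
    using False n l u by (intro rect_pq[OF _ q _ _ _ w]) (auto simp: algebra_simps)
  then show ?thesis by (simp add: symR1)
qed

lemma rect_all:
  fixes a p q u w :: real
  assumes n: "p^2 + q^2 = 1" and u: "0 \<le> u" "u \<le> 1" and w: "0 \<le> w" "w \<le> 1"
    and l: "a + p*u + q*w = 0"
  shows "0 \<le> rectS 1 a p q u w \<and> rectS 1 a p q u w \<le> 1"
proof (cases "0 \<le> q")
  case True then show ?thesis using rect_q[OF True n u w l] by simp
next
  case False
  have "0 \<le> rectS 1 (a+q) p (-q) u (1-w) \<and> rectS 1 (a+q) p (-q) u (1-w) \<le> 1"
    using False n l w by (intro rect_q[OF _ _ u]) (auto simp: algebra_simps)
  then show ?thesis by (simp add: symR2)
qed

lemma rect_scale:
  fixes h a p q u w :: real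
  assumes h: "0 < h"
  shows "rectS h (h*a) p q (h*u) (h*w) = rectS 1 a p q u w"
proof -
  have e1: "phi (h*a) (h*a+p*h) = h * phi a (a+p)" using phi_hom[OF h, of a "a+p"] by (simp add: algebra_simps)
  have e2: "phi (h*a+p*h+q*h) (h*a+q*h) = h * phi (a+p+q) (a+q)" using phi_hom[OF h, of "a+p+q" "a+q"] by (simp add: algebra_simps)
  have e3: "phi (h*a+p*h) (h*a+p*h+q*h) = h * phi (a+p) (a+p+q)" using phi_hom[OF h, of "a+p" "a+p+q"] by (simp add: algebra_simps)
  have e4: "phi (h*a+q*h) (h*a) = h * phi (a+q) a" using phi_hom[OF h, of "a+q" "a"] by (simp add: algebra_simps)
  show ?thesis unfolding rectS_def rectD_def e1 e2 e3 e4 using h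
    by (simp add: field_simps power2_eq_square)
qed

lemma rect_gen:
  fixes h a p q u w :: real
  assumes h: "0 < h" and n: "p^2 + q^2 = 1" and u: "0 \<le> u" "u \<le> h" and w: "0 \<le> w" "w \<le> h"
    and l: "a + p*u + q*w = 0"
  shows "0 \<le> rectS h a p q u w \<and> rectS h a p q u w \<le> 1"
proof -
  have "rectS h a p q u w = rectS h (h*(a/h)) p q (h*(u/h)) (h*(w/h))" using h by simp
  also have "\<dots> = rectS 1 (a/h) p q (u/h) (w/h)" by (rule rect_scale[OF h])
  finally have e: "rectS h a p q u w = rectS 1 (a/h) p q (u/h) (w/h)" .
  have "a/h + p*(u/h) + q*(w/h) = (a + p*u + q*w)/h" by (simp add: add_divide_distrib)
  hence l': "a/h + p*(u/h) + q*(w/h) = 0" using l by simp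
  show ?thesis unfolding e using h u w
    by (intro rect_all[OF n _ _ _ _ l']) (auto simp: field_simps)
qed



lemma poly2_int:
  fixes a b \<alpha> \<beta> \<gamma> :: real
  assumes "a \<le> b"
  shows "((\<lambda>t. \<alpha> + \<beta>*t + \<gamma>*t^2) has_integral (\<alpha>*(b-a) + \<beta>*(b^2-a^2)/2 + \<gamma>*(b^3-a^3)/3)) {a..b}"
proof -
  have "((\<lambda>t. \<alpha> + \<beta>*t + \<gamma>*t^2) has_integral
      ((\<alpha>*b + \<beta>*b^2/2 + \<gamma>*b^3/3) - (\<alpha>*a + \<beta>*a^2/2 + \<gamma>*a^3/3))) {a..b}"
  proof (rule fundamental_theorem_of_calculus[OF assms])
    fix x assume "x \<in> {a..b}"
    show "((\<lambda>t. \<alpha>*t + \<beta>*t^2/2 + \<gamma>*t^3/3) has_vector_derivative (\<alpha> + \<beta>*x + \<gamma>*x^2)) (at x within {a..b})"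
      unfolding has_real_derivative_iff_has_vector_derivative[symmetric]
      by (auto intro!: derivative_eq_intros simp: power2_eq_square)
  qed
  then show ?thesis by (simp add: algebra_simps diff_divide_distrib)
qed

lemma lin_int:
  fixes a b \<alpha> \<beta> :: real
  assumes "a \<le> b"
  shows "((\<lambda>t. \<alpha> + \<beta>*t) has_integral (\<alpha>*(b-a) + \<beta>*(b^2-a^2)/2)) {a..b}"
  using poly2_int[OF assms, of \<alpha> \<beta> 0] by simp

lemma int_min: "integral {0..1} (\<lambda>t. min (u + t*(v-u)) (0::real)) = phi u v"
proof -
  consider "u = v" | "u \<noteq> v" "0 \<le> u" "0 \<le> v" | "u \<noteq> v" "u \<le> 0" "v \<le> 0"
    | "u < 0" "0 < v" | "v < 0" "0 < u" by linarith
  then show ?thesis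
  proof cases
    case 1 then show ?thesis by (simp add: phi_def)
  next
    case 2
    have "((\<lambda>t. min (u + t*(v-u)) 0) has_integral 0) {0..1}"
    proof (subst has_integral_cong)
      fix t :: real assume t: "t \<in> {0..1}"
      have "0 \<le> (1-t)*u + t * v" using t 2 by (intro add_nonneg_nonneg mult_nonneg_nonneg) auto
      then show "min (u + t*(v-u)) 0 = 0" by (simp add: algebra_simps)
    qed simp
    then show ?thesis using 2 by (simp add: integral_unique phi_nn)
  next
    case 3
    have "((\<lambda>t. min (u + t*(v-u)) 0) has_integral (u*(1-0) + (v-u)*(1^2-0^2)/2)) {0..1}"
    proof (subst has_integral_cong)
      fix t :: real assume t: "t \<in> {0..1}"
      have "(1-t)*u + t * v \<le> 0" using t 3
        by (intro add_nonpos_nonpos mult_nonneg_nonpos) auto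
      then show "min (u + t*(v-u)) 0 = u + (v-u)*t" by (simp add: algebra_simps)
    qed (rule lin_int, simp)
    then show ?thesis using 3 by (simp add: integral_unique phi_np field_simps)
  next
    case 4
    define t0 where "t0 = -u/(v-u)"
    have t0: "0 \<le> t0" "t0 \<le> 1" using 4 by (auto simp: t0_def field_simps)
    have A: "((\<lambda>t. min (u + t*(v-u)) 0) has_integral (u*(t0-0) + (v-u)*(t0^2-0^2)/2)) {0..t0}"
    proof (subst has_integral_cong)
      fix t :: real assume t: "t \<in> {0..t0}"
      have "t*(v-u) \<le> t0*(v-u)" using t 4 by (intro mult_right_mono) auto
      also have "t0*(v-u) = -u" using 4 by (simp add: t0_def)
      finally show "min (u + t*(v-u)) 0 = u + (v-u)*t" by (simp add: algebra_simps)
    qed (rule lin_int, use t0 in simp)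
    have B: "((\<lambda>t. min (u + t*(v-u)) 0) has_integral 0) {t0..1}"
    proof (subst has_integral_cong)
      fix t :: real assume t: "t \<in> {t0..1}"
      have "t0*(v-u) \<le> t*(v-u)" using t 4 by (intro mult_right_mono) auto
      moreover have "t0*(v-u) = -u" using 4 by (simp add: t0_def)
      ultimately show "min (u + t*(v-u)) 0 = 0" by (simp add: algebra_simps)
    qed simp
    have "((\<lambda>t. min (u + t*(v-u)) 0) has_integral (u*(t0-0) + (v-u)*(t0^2-0^2)/2 + 0)) {0..1}"
      by (rule has_integral_combine[OF t0 A B])
    moreover have "u*(t0-0) + (v-u)*(t0^2-0^2)/2 + 0 = phi u v"
      using 4 apply (simp add: phi_mix t0_def)
      apply (simp add: divide_simps)
      apply (simp add: algebra_simps power2_eq_square)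
      done
    ultimately show ?thesis by (simp add: integral_unique)
  next
    case 5
    define t0 where "t0 = u/(u-v)"
    have t0: "0 \<le> t0" "t0 \<le> 1" using 5 by (auto simp: t0_def field_simps)
    have A: "((\<lambda>t. min (u + t*(v-u)) 0) has_integral 0) {0..t0}"
    proof (subst has_integral_cong)
      fix t :: real assume t: "t \<in> {0..t0}"
      have "t*(u-v) \<le> t0*(u-v)" using t 5 by (intro mult_right_mono) auto
      moreover have "t0*(u-v) = u" using 5 by (simp add: t0_def)
      ultimately show "min (u + t*(v-u)) 0 = 0" by (simp add: algebra_simps)
    qed simp
    have B: "((\<lambda>t. min (u + t*(v-u)) 0) has_integral (u*(1-t0) + (v-u)*(1^2-t0^2)/2)) {t0..1}"
    proof (subst has_integral_cong)
      fix t :: real assume t: "t \<in> {t0..1}"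
      have "t0*(u-v) \<le> t*(u-v)" using t 5 by (intro mult_right_mono) auto
      moreover have "t0*(u-v) = u" using 5 by (simp add: t0_def)
      ultimately show "min (u + t*(v-u)) 0 = u + (v-u)*t" by (simp add: algebra_simps)
    qed (rule lin_int, use t0 in simp)
    have "((\<lambda>t. min (u + t*(v-u)) 0) has_integral (0 + (u*(1-t0) + (v-u)*(1^2-t0^2)/2))) {0..1}"
      by (rule has_integral_combine[OF t0 A B])
    moreover have "0 + (u*(1-t0) + (v-u)*(1^2-t0^2)/2) = phi u v"
      using 5 apply (simp add: phi_mix' t0_def)
      apply (simp add: divide_simps)
      apply (simp add: algebra_simps power2_eq_square)
      done
    ultimately show ?thesis by (simp add: integral_unique)
  qed
qed

lemma grad_RQ:
  assumes f: "\<forall>X. f X = a + b*fst X + c * snd X + d*((fst X)^2 - (snd X)^2)"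
  shows "grad f X = (b + 2*d*fst X, c - 2*d * snd X)"
proof -
  have f': "f = (\<lambda>X. a + b*fst X + c * snd X + d*((fst X)^2 - (snd X)^2))" using f by auto
  have 1: "deriv (\<lambda>t. a + b*t + c * snd X + d*(t^2 - (snd X)^2)) (fst X) = b + 2*d*fst X"
    by (rule DERIV_imp_deriv) (auto intro!: derivative_eq_intros)
  have 2: "deriv (\<lambda>t. a + b*fst X + c*t + d*((fst X)^2 - t^2)) (snd X) = c - 2*d * snd X"
    by (rule DERIV_imp_deriv) (auto intro!: derivative_eq_intros)
  show ?thesis unfolding grad_def f' using 1 2 by simp
qed

lemma grad_CR:
  assumes f: "\<forall>X. f X = a + b*fst X + c * snd X"
  shows "grad f X = (b, c)"
  using grad_RQ[of f a b c 0 X] f by simp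

lemma avg_quad:
  fixes A B :: "real \<times> real"
  shows "integral {0..1} (\<lambda>t. indicator UNIV (A + t *\<^sub>R (B - A)) *
      (a + b*fst (A + t *\<^sub>R (B - A)) + c * snd (A + t *\<^sub>R (B - A))
       + d*((fst (A + t *\<^sub>R (B - A)))^2 - (snd (A + t *\<^sub>R (B - A)))^2)))
    = a + b*(fst A + fst B)/2 + c*(snd A + snd B)/2
      + d*(((fst A)^2 + fst A*fst B + (fst B)^2)/3 - ((snd A)^2 + snd A * snd B + (snd B)^2)/3)"
proof -
  obtain A1 A2 B1 B2 where AB: "A = (A1, A2)" "B = (B1, B2)" by (cases A, cases B) auto
  let ?al = "a + b*A1 + c*A2 + d*(A1^2 - A2^2)"
  let ?be = "b*(B1-A1) + c*(B2-A2) + d*(2*A1*(B1-A1) - 2*A2*(B2-A2))"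
  let ?ga = "d*((B1-A1)^2 - (B2-A2)^2)"
  have eq: "indicator UNIV (A + t *\<^sub>R (B - A)) *
      (a + b*fst (A + t *\<^sub>R (B - A)) + c * snd (A + t *\<^sub>R (B - A))
       + d*((fst (A + t *\<^sub>R (B - A)))^2 - (snd (A + t *\<^sub>R (B - A)))^2))
      = ?al + ?be*t + ?ga*t^2" for t :: real
    unfolding AB by (simp add: algebra_simps power2_eq_square)
  have I: "integral {0..1} (\<lambda>t. ?al + ?be*t + ?ga*t^2) = ?al*(1-0) + ?be*(1^2-0^2)/2 + ?ga*(1^3-0^3)/3"
    by (rule integral_unique, rule poly2_int) simp
  have "integral {0..1} (\<lambda>t. indicator UNIV (A + t *\<^sub>R (B - A)) *
      (a + b*fst (A + t *\<^sub>R (B - A)) + c * snd (A + t *\<^sub>R (B - A))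
       + d*((fst (A + t *\<^sub>R (B - A)))^2 - (snd (A + t *\<^sub>R (B - A)))^2)))
      = integral {0..1} (\<lambda>t. ?al + ?be*t + ?ga*t^2)"
    by (rule integral_cong) (rule eq)
  also have "\<dots> = ?al*(1-0) + ?be*(1^2-0^2)/2 + ?ga*(1^3-0^3)/3" by (rule I)
  also have "\<dots> = a + b*(fst A + fst B)/2 + c * (snd A + snd B)/2
      + d*(((fst A)^2 + fst A*fst B + (fst B)^2)/3 - ((snd A)^2 + snd A * snd B + (snd B)^2)/3)"
    unfolding AB by (simp add: field_simps power2_eq_square)
  finally show ?thesis .
qed

lemma delta_seg:
  fixes A B D n :: "real \<times> real" and C Tm :: "(real \<times> real) set"
  assumes C: "convex C" and A: "A \<in> C" and B: "B \<in> C" and sig: "\<sigma> \<in> {-1, 1}"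
    and Tm: "Tm = {X \<in> C. \<sigma> * (n \<bullet> (X - D)) < 0}"
  shows "integral {0..1} (\<lambda>t. indicator Tm (A + t *\<^sub>R (B - A)) * (n \<bullet> ((A + t *\<^sub>R (B - A)) - D)))
    = \<sigma> * phi (\<sigma> * (n \<bullet> (A - D))) (\<sigma> * (n \<bullet> (B - D)))"
proof -
  let ?u = "\<sigma> * (n \<bullet> (A - D))" and ?v = "\<sigma> * (n \<bullet> (B - D))"
  have s2: "\<sigma> * \<sigma> = 1" using sig by auto
  have eq: "indicator Tm (A + t *\<^sub>R (B - A)) * (n \<bullet> ((A + t *\<^sub>R (B - A)) - D))
      = \<sigma> * min (?u + t*(?v - ?u)) 0" if t: "t \<in> {0..1}" for t
  proof -
    have inC: "A + t *\<^sub>R (B - A) \<in> C"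
    proof -
      have "A + t *\<^sub>R (B - A) = (1 - t) *\<^sub>R A + t *\<^sub>R B" by (simp add: algebra_simps)
      also have "\<dots> \<in> C" using C A B t by (intro convexD) auto
      finally show ?thesis .
    qed
    have L: "n \<bullet> ((A + t *\<^sub>R (B - A)) - D) = n \<bullet> (A - D) + t * (n \<bullet> (B - D) - n \<bullet> (A - D))"
      by (simp add: inner_diff_right inner_add_right algebra_simps)
    have "?u + t*(?v - ?u) = \<sigma> * (n \<bullet> ((A + t *\<^sub>R (B - A)) - D))" unfolding L by (simp add: algebra_simps)
    then show ?thesis using inC sig unfolding Tm
      by (auto simp: indicator_def min_def algebra_simps)
  qed
  have "integral {0..1} (\<lambda>t. indicator Tm (A + t *\<^sub>R (B - A)) * (n \<bullet> ((A + t *\<^sub>R (B - A)) - D)))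
      = integral {0..1} (\<lambda>t. \<sigma> * min (?u + t*(?v - ?u)) 0)"
    by (rule integral_cong) (rule eq)
  also have "\<dots> = \<sigma> * integral {0..1} (\<lambda>t. min (?u + t*(?v - ?u)) 0)"
    by (rule integral_mult_right)
  also have "\<dots> = \<sigma> * phi ?u ?v" by (simp only: int_min)
  finally show ?thesis .
qed

lemma edge_sub_elem:
  assumes "i < length V"
  shows "edge V i \<subseteq> elem V"
proof -
  have "0 < length V" using assms by linarith
  hence "(i+1) mod length V < length V" by simp
  hence "V ! ((i+1) mod length V) \<in> set V" by (rule nth_mem)
  moreover have "V ! i \<in> set V" using assms by (rule nth_mem)
  ultimately show ?thesis unfolding edge_def elem_def
    by (intro closed_segment_subset) (auto intro: hull_inc)
qed

lemma edge_pt_in: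
  assumes "t \<in> {0..1}"
  shows "edge_pt V i t \<in> edge V i"
proof -
  have "edge_pt V i t = (1 - t) *\<^sub>R V ! i + t *\<^sub>R V ! ((i + 1) mod length V)"
    unfolding edge_pt_def by (simp add: algebra_simps)
  then show ?thesis unfolding edge_def in_segment(1) using assms by (intro exI[of _ t]) auto
qed

lemma sum_reduce:
  fixes V :: "(real \<times> real) list" and g :: "nat \<Rightarrow> real" and L :: "real \<times> real \<Rightarrow> real"
  assumes Tm: "Tm = {X \<in> elem V. \<sigma> * (n \<bullet> (X - D)) < 0}"
    and Tp: "Tp = {X \<in> elem V. \<sigma> * (n \<bullet> (X - D)) > 0}"
  shows "(\<Sum>i \<in> I_bar V Tm Tp. g i * edge_avg_on V i Tm L) = (\<Sum>i<length V. g i * edge_avg_on V i Tm L)"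
proof (rule sum.mono_neutral_left)
  show "finite {..<length V}" by simp
  show "I_bar V Tm Tp \<subseteq> {..<length V}" unfolding I_bar_def I_side_def I_int_def by auto
  show "\<forall>i\<in>{..<length V} - I_bar V Tm Tp. g i * edge_avg_on V i Tm L = 0"
  proof
    fix i assume i: "i \<in> {..<length V} - I_bar V Tm Tp"
    hence il: "i < length V" and nI: "i \<notin> I_bar V Tm Tp" by auto
    have cvx: "convex (elem V)" unfolding elem_def by simp
    have es: "edge V i \<subseteq> elem V" using il by (rule edge_sub_elem)
    have disj: "edge V i \<inter> Tm = {}"
    proof (rule ccontr)
      assume "edge V i \<inter> Tm \<noteq> {}"
      then obtain X where X: "X \<in> edge V i" "X \<in> Tm" by auto
      have noTp: "edge V i \<inter> Tp = {}" using nI il X unfolding I_bar_def I_int_def by auto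
      have "edge V i \<subseteq> closure Tm"
      proof
        fix Y assume Y: "Y \<in> edge V i"
        show "Y \<in> closure Tm"
        proof (cases "Y = X")
          case True then show ?thesis using X closure_subset by auto
        next
          case False
          have YE: "Y \<in> elem V" using Y es by auto
          have XE: "X \<in> elem V" using X es by auto
          have Yle: "\<sigma> * (n \<bullet> (Y - D)) \<le> 0" using Y YE noTp unfolding Tp by auto
          have Xlt: "\<sigma> * (n \<bullet> (X - D)) < 0" using X unfolding Tm by auto
          have "open_segment Y X \<subseteq> Tm"
          proof
            fix Z assume "Z \<in> open_segment Y X"
            then obtain u where u: "0 < u" "u < 1" and Z: "Z = (1 - u) *\<^sub>R Y + u *\<^sub>R X"
              unfolding in_segment(2) by auto
            have ZE: "Z \<in> elem V" unfolding Z using cvx YE XE u by (intro convexD) auto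
            have "\<sigma> * (n \<bullet> (Z - D)) = (1-u) * (\<sigma> * (n \<bullet> (Y - D))) + u * (\<sigma> * (n \<bullet> (X - D)))"
              unfolding Z by (simp add: inner_diff_right inner_add_right algebra_simps)
            also have "\<dots> < 0"
            proof -
              have "(1-u) * (\<sigma> * (n \<bullet> (Y - D))) \<le> 0" using u Yle by (simp add: mult_nonneg_nonpos)
              moreover have "u * (\<sigma> * (n \<bullet> (X - D))) < 0" using u Xlt by (simp add: mult_pos_neg)
              ultimately show ?thesis by linarith
            qed
            finally show "Z \<in> Tm" unfolding Tm using ZE by auto
          qed
          hence "closure (open_segment Y X) \<subseteq> closure Tm" by (rule closure_mono)
          moreover have "Y \<in> closure (open_segment Y X)" using False by simp
          ultimately show ?thesis by auto
        qed
      qed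
      then show False using nI il unfolding I_bar_def I_side_def by auto
    qed
    have "edge_avg_on V i Tm L = integral {0..1} (\<lambda>t::real. 0::real)"
      unfolding edge_avg_on_def
    proof (rule integral_cong)
      fix t :: real assume "t \<in> {0..1}"
      hence "edge_pt V i t \<notin> Tm" using edge_pt_in disj by blast
      then show "indicator Tm (edge_pt V i t) * L (edge_pt V i t) = 0" by simp
    qed
    then show "g i * edge_avg_on V i Tm L = 0" by simp
  qed
qed



lemma avg_poly:
  assumes f: "\<forall>X. f X = a + b*fst X + c * snd X + d*((fst X)^2 - (snd X)^2)"
  shows "edge_avg V j f = a + b*(fst (V!j) + fst (V!((j+1) mod length V)))/2
      + c * (snd (V!j) + snd (V!((j+1) mod length V)))/2
      + d*(((fst (V!j))^2 + fst (V!j)*fst (V!((j+1) mod length V)) + (fst (V!((j+1) mod length V)))^2)/3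
         - ((snd (V!j))^2 + snd (V!j) * snd (V!((j+1) mod length V)) + (snd (V!((j+1) mod length V)))^2)/3)"
proof -
  have f': "f = (\<lambda>X. a + b*fst X + c * snd X + d*((fst X)^2 - (snd X)^2))" using f by auto
  show ?thesis unfolding edge_avg_def edge_avg_on_def edge_pt_def f'
    by (rule avg_quad)
qed

lemma avg_CR:
  assumes f: "\<forall>X. f X = a + b*fst X + c * snd X"
  shows "edge_avg V j f = a + b*(fst (V!j) + fst (V!((j+1) mod length V)))/2
      + c * (snd (V!j) + snd (V!((j+1) mod length V)))/2"
  using avg_poly[of f a b c 0 V j] f by simp

lemma tri_gamma:
  fixes V :: "(real \<times> real) list" and f :: "real \<times> real \<Rightarrow> real"
  assumes V: "V = [(px,py), (px,py) + (s1*h, 0), (px,py) + (0, s2*h)]"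
    and s1: "s1 \<in> {-1,1}" and s2: "s2 \<in> {-1,1}" and h: "0 < h"
    and f: "f \<in> CR_space"
    and e0: "edge_avg V 0 f = e0" and e1: "edge_avg V 1 f = e1" and e2: "edge_avg V 2 f = e2"
  shows "grad f F = (2 * s1*(e1-e2)/h, 2 * s2*(e1-e0)/h)"
proof -
  obtain a b c where abc: "\<forall>X. f X = a + b*fst X + c * snd X" using f unfolding CR_space_def by auto
  have E0: "e0 = a + b*(px + (px + s1*h))/2 + c * (py+py)/2" using avg_CR[OF abc, of V 0] e0 V by simp
  have E1: "e1 = a + b*((px + s1*h) + px)/2 + c * (py+(py + s2*h))/2" using avg_CR[OF abc, of V 1] e1 V by simp
  have E2: "e2 = a + b*(px + px)/2 + c * ((py + s2*h)+py)/2" using avg_CR[OF abc, of V 2] e2 V by simp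
  have ss1: "s1 * s1 = 1" and ss2: "s2 * s2 = 1" using s1 s2 by auto
  have "e1 - e2 = b * s1 * h/2" using E1 E2 by (simp add: algebra_simps)
  hence B: "b = 2 * s1*(e1-e2)/h" using h ss1 by (simp add: field_simps)
  have "e1 - e0 = c * s2 * h/2" using E1 E0 by (simp add: algebra_simps)
  hence C: "c = 2 * s2*(e1-e0)/h" using h ss2 by (simp add: field_simps)
  show ?thesis using grad_CR[OF abc] B C by simp
qed

lemma delta_edge:
  fixes V :: "(real \<times> real) list"
  assumes j: "j < length V" and sig: "\<sigma> \<in> {-1, 1}"
    and Tm: "Tm = {X \<in> elem V. \<sigma> * (n \<bullet> (X - D)) < 0}"
  shows "edge_avg_on V j Tm (\<lambda>X. n \<bullet> (X - D))
    = \<sigma> * phi (\<sigma> * (n \<bullet> (V!j - D))) (\<sigma> * (n \<bullet> (V!((j+1) mod length V) - D)))"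
proof -
  have "0 < length V" using j by linarith
  hence "(j+1) mod length V < length V" by simp
  hence B: "V ! ((j+1) mod length V) \<in> elem V" unfolding elem_def by (intro hull_inc nth_mem)
  have A: "V ! j \<in> elem V" unfolding elem_def using j by (intro hull_inc nth_mem)
  show ?thesis unfolding edge_avg_on_def edge_pt_def
    by (rule delta_seg[OF _ A B sig Tm]) (simp add: elem_def)
qed

lemma norm_pair1: "norm (n::real\<times>real) = 1 \<Longrightarrow> (fst n)^2 + (snd n)^2 = 1"
  by (cases n) (simp add: norm_Pair)

lemma sum3: "(\<Sum>i<(3::nat). f i) = f 0 + f 1 + (f 2 :: real)"
  by (simp add: eval_nat_numeral)

lemma tri_final:
  fixes V :: "(real \<times> real) list" and \<psi> :: "nat \<Rightarrow> real \<times> real \<Rightarrow> real"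
  assumes h: "0 < h" and Vt: "V \<in> cart_triangles h"
    and shape: "\<forall>i < length V. \<psi> i \<in> CR_space \<and>
                  (\<forall>j < length V. edge_avg V j (\<psi> i) = (if i = j then 1 else 0))"
    and n_unit: "norm n = 1" and sig: "\<sigma> \<in> {-1, 1}"
    and Tm: "Tm = {X \<in> elem V. \<sigma> * (n \<bullet> (X - D)) < 0}"
    and Tp: "Tp = {X \<in> elem V. \<sigma> * (n \<bullet> (X - D)) > 0}"
  shows "0 \<le> (\<Sum>i \<in> I_bar V Tm Tp.
                (grad (\<psi> i) F \<bullet> n) * edge_avg_on V i Tm (\<lambda>X. n \<bullet> (X - D)))
       \<and> (\<Sum>i \<in> I_bar V Tm Tp.
                (grad (\<psi> i) F \<bullet> n) * edge_avg_on V i Tm (\<lambda>X. n \<bullet> (X - D))) \<le> 1"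
proof -
  obtain P s1 s2 where V: "V = [P, P + (s1*h, 0), P + (0, s2*h)]" and s1: "s1 \<in> {-1,1}" and s2: "s2 \<in> {-1,1}"
    using Vt unfolding cart_triangles_def by blast
  obtain px py where P: "P = (px, py)" by (cases P)
  obtain n1 n2 where n: "n = (n1, n2)" by (cases n)
  have nn: "n1^2 + n2^2 = 1" using norm_pair1[OF n_unit] n by simp
  have len: "length V = 3" using V by simp
  let ?L = "\<lambda>X. n \<bullet> (X - D)"
  let ?S = "\<Sum>i \<in> I_bar V Tm Tp. (grad (\<psi> i) F \<bullet> n) * edge_avg_on V i Tm ?L"
  have S1: "?S = (\<Sum>i<3. (grad (\<psi> i) F \<bullet> n) * edge_avg_on V i Tm ?L)"
    using sum_reduce[OF Tm Tp, of "\<lambda>i. grad (\<psi> i) F \<bullet> n" ?L] len by simp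
  define d0 where "d0 = edge_avg_on V 0 Tm ?L"
  define d1 where "d1 = edge_avg_on V 1 Tm ?L"
  define d2 where "d2 = edge_avg_on V 2 Tm ?L"
  have g0: "grad (\<psi> 0) F = (2 * s1*(0-0)/h, 2 * s2*(0-1)/h)"
    using shape len by (intro tri_gamma[OF V[unfolded P] s1 s2 h]) auto
  have g1: "grad (\<psi> 1) F = (2 * s1*(1-0)/h, 2 * s2*(1-0)/h)"
    using shape len by (intro tri_gamma[OF V[unfolded P] s1 s2 h]) auto
  have g2: "grad (\<psi> 2) F = (2 * s1*(0-1)/h, 2 * s2*(0-0)/h)"
    using shape len by (intro tri_gamma[OF V[unfolded P] s1 s2 h]) auto
  define l where "l = n \<bullet> (P - D)"
  have D0: "d0 = \<sigma> * phi (\<sigma> * l) (\<sigma> * (l + s1*h*n1))"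
    unfolding d0_def using delta_edge[OF _ sig Tm, of 0] len V unfolding l_def n P
    by (simp add: inner_diff_right inner_add_left algebra_simps)
  have D1: "d1 = \<sigma> * phi (\<sigma> * (l + s1*h*n1)) (\<sigma> * (l + s2*h*n2))"
    unfolding d1_def using delta_edge[OF _ sig Tm, of 1] len V unfolding l_def n P
    by (simp add: inner_diff_right inner_add_left algebra_simps)
  have D2: "d2 = \<sigma> * phi (\<sigma> * (l + s2*h*n2)) (\<sigma> * l)"
    unfolding d2_def using delta_edge[OF _ sig Tm, of 2] len V unfolding l_def n P
    by (simp add: inner_diff_right inner_add_left algebra_simps)
  have Sval: "?S = (-2 * s2*n2/h)*d0 + (2 * s1*n1/h + 2 * s2*n2/h)*d1 + (-2 * s1*n1/h)*d2"
  proof -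
    have "?S = (grad (\<psi> 0) F \<bullet> n)*d0 + (grad (\<psi> 1) F \<bullet> n)*d1 + (grad (\<psi> 2) F \<bullet> n)*d2"
      unfolding S1 sum3 d0_def d1_def d2_def by simp
    then show ?thesis unfolding g0 g1 g2 n by (simp add: algebra_simps)
  qed
  define a' where "a' = \<sigma> * l"
  define b' where "b' = \<sigma> * (l + s1*h*n1)"
  define c' where "c' = \<sigma> * (l + s2*h*n2)"
  have ss: "\<sigma> * \<sigma> = 1" "s1 * s1 = 1" "s2 * s2 = 1" using sig s1 s2 by auto
  have N: "(b'-a')^2 + (c'-a')^2 = h^2"
  proof -
    have "(b'-a')^2 + (c'-a')^2 = (\<sigma>*\<sigma>)*(s1 * s1)*h^2*n1^2 + (\<sigma>*\<sigma>)*(s2 * s2)*h^2*n2^2"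
      unfolding a'_def b'_def c'_def by (simp add: power2_eq_square algebra_simps)
    also have "\<dots> = h^2 * (n1^2 + n2^2)" using ss by (simp add: algebra_simps)
    finally show ?thesis using nn by simp
  qed
  have T: "0 \<le> 2*((phi b' c' - phi c' a')*(b'-a') + (phi b' c' - phi a' b')*(c'-a'))
     \<and> 2*((phi b' c' - phi c' a')*(b'-a') + (phi b' c' - phi a' b')*(c'-a')) \<le> (b'-a')^2 + (c'-a')^2"
    using tri_main[of b' a' c'] N h by simp
  have "2*((phi b' c' - phi c' a')*(b'-a') + (phi b' c' - phi a' b')*(c'-a')) = h^2 * ?S"
  proof -
    have BA: "b' - a' = \<sigma> * (s1*h*n1)" and CA: "c' - a' = \<sigma> * (s2*h*n2)"
      unfolding a'_def b'_def c'_def by (simp_all add: algebra_simps)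
    have "\<sigma> * phi b' c' = d1" "\<sigma> * phi c' a' = d2" "\<sigma> * phi a' b' = d0"
      unfolding D0 D1 D2 a'_def b'_def c'_def by simp_all
    hence P: "phi b' c' = \<sigma> * d1" "phi c' a' = \<sigma> * d2" "phi a' b' = \<sigma> * d0"
      using ss(1) by (metis mult.assoc mult_1)+
    have ss': "\<sigma> * (\<sigma> * x) = x" for x using ss(1) by (metis mult.assoc mult_1)
    show ?thesis unfolding P BA CA Sval using h
      by (simp add: field_simps power2_eq_square ss ss')
  qed
  with T N have "0 \<le> h^2 * ?S \<and> h^2 * ?S \<le> h^2" by simp
  then show ?thesis using h
    by (simp add: zero_le_mult_iff mult_le_cancel_left1)
qed



lemma rect_gamma:
  fixes V :: "(real \<times> real) list" and f :: "real \<times> real \<Rightarrow> real"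
  assumes V: "V = [(x0, y0), (x0 + h, y0), (x0 + h, y0 + h), (x0, y0 + h)]" and h: "0 < h"
    and f: "f \<in> RQ1_space"
    and e0: "edge_avg V 0 f = e0" and e1: "edge_avg V 1 f = e1" and e2: "edge_avg V 2 f = e2"
    and e3: "edge_avg V 3 f = e3"
  shows "grad f F \<bullet> (n1, n2) = n1 * ((e1-e3)/h + (-3*(e0+e2-e1-e3)/(2*h^2))*(2*(fst F - x0) - h))
      + n2 * ((e2-e0)/h + (-3*(e0+e2-e1-e3)/(2*h^2))*(h - 2*(snd F - y0)))"
proof -
  obtain a b c d where abcd: "\<forall>X. f X = a + b*fst X + c * snd X + d*((fst X)^2 - (snd X)^2)"
    using f unfolding RQ1_space_def by auto
  have E0: "e0 = a + b*(x0 + (x0+h))/2 + c * (y0+y0)/2 + d*((x0^2 + x0*(x0+h) + (x0+h)^2)/3 - (y0^2 + y0*y0 + y0^2)/3)"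
    using avg_poly[OF abcd, of V 0] e0 V by simp
  have E1: "e1 = a + b*((x0+h) + (x0+h))/2 + c * (y0+(y0+h))/2 + d*(((x0+h)^2 + (x0+h)*(x0+h) + (x0+h)^2)/3 - (y0^2 + y0*(y0+h) + (y0+h)^2)/3)"
    using avg_poly[OF abcd, of V 1] e1 V by simp
  have E2: "e2 = a + b*((x0+h) + x0)/2 + c * ((y0+h)+(y0+h))/2 + d*(((x0+h)^2 + (x0+h)*x0 + x0^2)/3 - ((y0+h)^2 + (y0+h)*(y0+h) + (y0+h)^2)/3)"
    using avg_poly[OF abcd, of V 2] e2 V by simp
  have E3: "e3 = a + b*(x0 + x0)/2 + c * ((y0+h)+y0)/2 + d*((x0^2 + x0*x0 + x0^2)/3 - ((y0+h)^2 + (y0+h)*y0 + y0^2)/3)"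
    using avg_poly[OF abcd, of V 3] e3 V by simp
  have "e0 + e2 - e1 - e3 = -2*d*h^2/3" unfolding E0 E1 E2 E3 by (simp add: field_simps power2_eq_square)
  hence dd: "d = -3*(e0+e2-e1-e3)/(2*h^2)" using h by (simp add: field_simps)
  have "e1 - e3 = b*h + d*(2*x0*h + h^2)" unfolding E1 E3 by (simp add: field_simps power2_eq_square)
  hence bb: "b + 2*d*fst F = (e1-e3)/h + d*(2*(fst F - x0) - h)" using h by (simp add: field_simps power2_eq_square)
  have "e2 - e0 = c*h - d*(2*y0*h + h^2)" unfolding E2 E0 by (simp add: field_simps power2_eq_square)
  hence cc: "c - 2*d * snd F = (e2-e0)/h + d*(h - 2*(snd F - y0))" using h by (simp add: field_simps power2_eq_square)
  show ?thesis unfolding grad_RQ[OF abcd] using bb cc dd by simp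
qed

lemma sum4: "(\<Sum>i<(4::nat). f i) = f 0 + f 1 + f 2 + (f 3 :: real)"
  by (simp add: eval_nat_numeral)

lemma rect_final:
  fixes V :: "(real \<times> real) list" and \<psi> :: "nat \<Rightarrow> real \<times> real \<Rightarrow> real"
  assumes h: "0 < h" and V: "V = [(x0, y0), (x0 + h, y0), (x0 + h, y0 + h), (x0, y0 + h)]"
    and shape: "\<forall>i < length V. \<psi> i \<in> RQ1_space \<and>
                  (\<forall>j < length V. edge_avg V j (\<psi> i) = (if i = j then 1 else 0))"
    and n_unit: "norm n = 1" and sig: "\<sigma> \<in> {-1, 1}"
    and Tm: "Tm = {X \<in> elem V. \<sigma> * (n \<bullet> (X - D)) < 0}"
    and Tp: "Tp = {X \<in> elem V. \<sigma> * (n \<bullet> (X - D)) > 0}"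
    and FV: "F \<in> elem V" and FL: "n \<bullet> (F - D) = 0"
  shows "0 \<le> (\<Sum>i \<in> I_bar V Tm Tp.
                (grad (\<psi> i) F \<bullet> n) * edge_avg_on V i Tm (\<lambda>X. n \<bullet> (X - D)))
       \<and> (\<Sum>i \<in> I_bar V Tm Tp.
                (grad (\<psi> i) F \<bullet> n) * edge_avg_on V i Tm (\<lambda>X. n \<bullet> (X - D))) \<le> 1"
proof -
  obtain n1 n2 where n: "n = (n1, n2)" by (cases n)
  have nn: "n1^2 + n2^2 = 1" using norm_pair1[OF n_unit] n by simp
  have len: "length V = 4" using V by simp
  let ?L = "\<lambda>X. n \<bullet> (X - D)"
  let ?S = "\<Sum>i \<in> I_bar V Tm Tp. (grad (\<psi> i) F \<bullet> n) * edge_avg_on V i Tm ?L"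
  have S1: "?S = (\<Sum>i<4. (grad (\<psi> i) F \<bullet> n) * edge_avg_on V i Tm ?L)"
    using sum_reduce[OF Tm Tp, of "\<lambda>i. grad (\<psi> i) F \<bullet> n" ?L] len by simp
  define d0 where "d0 = edge_avg_on V 0 Tm ?L"
  define d1 where "d1 = edge_avg_on V 1 Tm ?L"
  define d2 where "d2 = edge_avg_on V 2 Tm ?L"
  define d3 where "d3 = edge_avg_on V 3 Tm ?L"
  define u where "u = fst F - x0"
  define w where "w = snd F - y0"
  have g0: "grad (\<psi> 0) F \<bullet> n = n1 * ((0-0)/h + (-3*(1+0-0-0)/(2*h^2))*(2*u - h)) + n2 * ((0-1)/h + (-3*(1+0-0-0)/(2*h^2))*(h - 2*w))"
    unfolding n u_def w_def using shape len by (intro rect_gamma[OF V h]) auto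
  have g1: "grad (\<psi> 1) F \<bullet> n = n1 * ((1-0)/h + (-3*(0+0-1-0)/(2*h^2))*(2*u - h)) + n2 * ((0-0)/h + (-3*(0+0-1-0)/(2*h^2))*(h - 2*w))"
    unfolding n u_def w_def using shape len by (intro rect_gamma[OF V h]) auto
  have g2: "grad (\<psi> 2) F \<bullet> n = n1 * ((0-0)/h + (-3*(0+1-0-0)/(2*h^2))*(2*u - h)) + n2 * ((1-0)/h + (-3*(0+1-0-0)/(2*h^2))*(h - 2*w))"
    unfolding n u_def w_def using shape len by (intro rect_gamma[OF V h]) auto
  have g3: "grad (\<psi> 3) F \<bullet> n = n1 * ((0-1)/h + (-3*(0+0-0-1)/(2*h^2))*(2*u - h)) + n2 * ((0-0)/h + (-3*(0+0-0-1)/(2*h^2))*(h - 2*w))"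
    unfolding n u_def w_def using shape len by (intro rect_gamma[OF V h]) auto
  define l where "l = n \<bullet> ((x0, y0) - D)"
  have D0: "d0 = \<sigma> * phi (\<sigma> * l) (\<sigma> * (l + h*n1))"
    unfolding d0_def using delta_edge[OF _ sig Tm, of 0] len V unfolding l_def n
    by (simp add: inner_diff_right inner_add_left algebra_simps)
  have D1: "d1 = \<sigma> * phi (\<sigma> * (l + h*n1)) (\<sigma> * (l + h*n1 + h*n2))"
    unfolding d1_def using delta_edge[OF _ sig Tm, of 1] len V unfolding l_def n
    by (simp add: inner_diff_right inner_add_left algebra_simps)
  have D2: "d2 = \<sigma> * phi (\<sigma> * (l + h*n1 + h*n2)) (\<sigma> * (l + h*n2))"
    unfolding d2_def using delta_edge[OF _ sig Tm, of 2] len V unfolding l_def n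
    by (simp add: inner_diff_right inner_add_left algebra_simps)
  have D3: "d3 = \<sigma> * phi (\<sigma> * (l + h*n2)) (\<sigma> * l)"
    unfolding d3_def using delta_edge[OF _ sig Tm, of 3] len V unfolding l_def n
    by (simp add: inner_diff_right inner_add_left algebra_simps)
  have Sval: "?S = g0v * d0 + g1v * d1 + g2v * d2 + g3v * d3"
    if "grad (\<psi> 0) F \<bullet> n = g0v" "grad (\<psi> 1) F \<bullet> n = g1v" "grad (\<psi> 2) F \<bullet> n = g2v" "grad (\<psi> 3) F \<bullet> n = g3v"
    for g0v g1v g2v g3v
    unfolding S1 sum4 d0_def d1_def d2_def d3_def using that by simp
  have ss: "\<sigma> * \<sigma> = 1" using sig by auto
  have ss': "\<sigma> * (\<sigma> * x) = x" for x using ss by (metis mult.assoc mult_1)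
  define a' where "a' = \<sigma> * l"
  define p where "p = \<sigma> * n1"
  define q where "q = \<sigma> * n2"
  have A1: "a' + p*h = \<sigma> * (l + h*n1)" "a' + p*h + q*h = \<sigma> * (l + h*n1 + h*n2)" "a' + q*h = \<sigma> * (l + h*n2)"
    unfolding a'_def p_def q_def by (simp_all add: algebra_simps)
  have P: "phi a' (a'+p*h) = \<sigma> * d0" "phi (a'+p*h) (a'+p*h+q*h) = \<sigma> * d1"
     "phi (a'+p*h+q*h) (a'+q*h) = \<sigma> * d2" "phi (a'+q*h) a' = \<sigma> * d3"
    unfolding D0 D1 D2 D3 ss' a'_def p_def q_def by (simp_all add: algebra_simps)
  have Seq: "?S = rectS h a' p q u w"
    unfolding Sval[OF g0 g1 g2 g3] rectS_def rectD_def P unfolding p_def q_def using h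
    by (simp add: field_simps power2_eq_square ss ss')
  have pq: "p^2 + q^2 = 1" unfolding p_def q_def using nn ss by (simp add: power2_eq_square algebra_simps ss')
  have box: "elem V \<subseteq> cbox (x0, y0) (x0 + h, y0 + h)"
    unfolding elem_def
  proof (rule hull_minimal)
    show "set V \<subseteq> cbox (x0, y0) (x0 + h, y0 + h)" using V h by auto
  qed (rule convex_box)
  have uw: "0 \<le> u" "u \<le> h" "0 \<le> w" "w \<le> h" using FV box unfolding u_def w_def
    by (cases F; auto)+
  have lin: "a' + p*u + q*w = 0"
  proof -
    have "n \<bullet> (F - D) = l + n1*u + n2*w" unfolding l_def n u_def w_def
      by (cases F) (simp add: inner_diff_right algebra_simps)
    hence "l + n1*u + n2*w = 0" using FL by simp
    hence "\<sigma> * (l + n1*u + n2*w) = 0" by simp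
    then show ?thesis unfolding a'_def p_def q_def by (simp add: algebra_simps)
  qed
  show ?thesis unfolding Seq using rect_gen[OF h pq uw lin] .
qed


theorem mainTheorem3:
  fixes h :: real
    and V :: "(real \<times> real) list"
    and Pi :: "(real \<times> real \<Rightarrow> real) set"
    and \<psi> :: "nat \<Rightarrow> real \<times> real \<Rightarrow> real"
    and D E F n :: "real \<times> real"
    and \<sigma> :: real
    and Tp Tm :: "(real \<times> real) set"
    and k1 k2 :: nat
  assumes h_pos: "h > 0"
    and elem_kind: "(V \<in> cart_triangles h \<and> Pi = CR_space) \<or> (V \<in> cart_rectangles h \<and> Pi = RQ1_space)"
    and shape: "\<forall>i < length V. \<psi> i \<in> Pi \<and>
                  (\<forall>j < length V. edge_avg V j (\<psi> i) = (if i = j then 1 else 0))"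
    and D_edge: "k1 < length V" "D \<in> edge V k1"
    and E_edge: "k2 < length V" "E \<in> edge V k2"
    and diff_edges: "k1 \<noteq> k2"
    and DE: "D \<noteq> E"
    and crosses: "open_segment D E \<subseteq> interior (elem V)"
    and n_unit: "norm n = 1"
    and n_normal: "n \<bullet> (E - D) = 0"
    and sigma: "\<sigma> \<in> {-1, 1}"
    and Tm_def: "Tm = {X \<in> elem V. \<sigma> * (n \<bullet> (X - D)) < 0}"
    and Tp_def: "Tp = {X \<in> elem V. \<sigma> * (n \<bullet> (X - D)) > 0}"
    and labelling: "card (I_bar V Tm Tp) \<le> card (I_bar V Tp Tm)"
    and F_on_l: "F \<in> closed_segment D E"
  shows "0 \<le> (\<Sum>i \<in> I_bar V Tm Tp.
                (grad (\<psi> i) F \<bullet> n) * edge_avg_on V i Tm (\<lambda>X. n \<bullet> (X - D)))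
       \<and> (\<Sum>i \<in> I_bar V Tm Tp.
                (grad (\<psi> i) F \<bullet> n) * edge_avg_on V i Tm (\<lambda>X. n \<bullet> (X - D))) \<le> 1"
proof -
  have FV: "F \<in> elem V"
  proof -
    have "D \<in> elem V" using D_edge edge_sub_elem by blast
    moreover have "E \<in> elem V" using E_edge edge_sub_elem by blast
    moreover have "convex (elem V)" unfolding elem_def by simp
    ultimately have "closed_segment D E \<subseteq> elem V" by (rule closed_segment_subset)
    then show ?thesis using F_on_l by auto
  qed
  have FL: "n \<bullet> (F - D) = 0"
  proof -
    obtain u where u: "F = (1 - u) *\<^sub>R D + u *\<^sub>R E" using F_on_l unfolding in_segment(1) by auto
    have "F - D = u *\<^sub>R (E - D)" unfolding u by (simp add: algebra_simps)
    then show ?thesis using n_normal by simp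
  qed
  from elem_kind show ?thesis
  proof
    assume "V \<in> cart_triangles h \<and> Pi = CR_space"
    then show ?thesis using shape by (intro tri_final[OF h_pos _ _ n_unit sigma Tm_def Tp_def]) auto
  next
    assume a: "V \<in> cart_rectangles h \<and> Pi = RQ1_space"
    then obtain x0 y0 where V: "V = [(x0, y0), (x0 + h, y0), (x0 + h, y0 + h), (x0, y0 + h)]"
      unfolding cart_rectangles_def by blast
    show ?thesis using shape a by (intro rect_final[OF h_pos V _ n_unit sigma Tm_def Tp_def FV FL]) auto
  qed
qed

end
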